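(* Fix an integer $n\geq1$ and a polynomial $f(q)\in\mathbb{Z}[q]$. Then $f(q)\in G_n\mathbb{Z}[q]$ if and only if $f(q)\in (1+q^m)^{\lfloor n/2m\rfloor}\mathbb{Z}[q]$ for all $1\leq m\leq \lfloor n/2\rfloor$, where $$G_n=\prod_{k=1}^{\lfloor\log_2 n\rfloor}\prod_{i=1}^{\lfloor n/2^k \rfloor}(1+q^i).$$ *)

theory Defs
  imports "HOL-Computational_Algebra.Polynomial" Complex_Main
begin

definition G :: "nat \<Rightarrow> int poly" where
  "G n = (\<Prod>k\<in>{1..nat \<lfloor>log 2 (real n)\<rfloor>}. \<Prod>i\<in>{1..n div 2 ^ k}. (1 + monom 1 i))"

end

theory Submission
  imports Defs "HOL-Computational_Algebra.Fundamental_Theorem_Algebra"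
begin


definition cp :: "int poly \<Rightarrow> complex poly" where "cp p = map_poly of_int p"

lemma cp_mult[simp]: "cp (p*q) = cp p * cp q"
  unfolding cp_def by (intro poly_eqI) (simp_all add: coeff_map_poly coeff_mult)

lemma cp_add[simp]: "cp (p+q) = cp p + cp q"
  unfolding cp_def by (intro poly_eqI) (simp_all add: coeff_map_poly)

lemma cp_diff[simp]: "cp (p-q) = cp p - cp q"
  unfolding cp_def by (intro poly_eqI) (simp_all add: coeff_map_poly)

lemma cp_1[simp]: "cp 1 = 1"
  unfolding cp_def by simp

lemma cp_monom[simp]: "cp (monom c n) = monom (of_int c) n"
  unfolding cp_def by (simp add: map_poly_monom)

lemma cp_power[simp]: "cp (p ^ k) = cp p ^ k"
  by (induction k) auto

lemma cp_prod[simp]: "cp (prod f A) = (\<Prod>x\<in>A. cp (f x))"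
  by (induction A rule: infinite_finite_induct) auto

lemma cp_eq_0_iff[simp]: "cp p = 0 \<longleftrightarrow> p = 0"
  unfolding cp_def by (auto simp: poly_eq_iff coeff_map_poly)

lemma degree_cp[simp]: "degree (cp p) = degree p"
  unfolding cp_def by (cases "p = 0") (auto intro!: map_poly_degree_eq)

lemma monic_dvd_cp:
  assumes "lead_coeff g = 1" shows "g dvd f \<longleftrightarrow> cp g dvd cp f"
proof
  assume "g dvd f" then show "cp g dvd cp f" by (auto elim!: dvdE)
next
  assume h: "cp g dvd cp f"
  have g0: "g \<noteq> 0" using assms by auto
  obtain q r where pd: "pseudo_divmod f g = (q,r)" by (cases "pseudo_divmod f g") auto
  from pseudo_divmod[OF g0 pd] assms have e: "f = g*q + r" and dr: "r = 0 \<or> degree r < degree g" by auto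
  have "cp r = cp f - cp g * cp q" using e by simp
  then have "cp g dvd cp r" using h by simp
  have "r = 0"
  proof (rule ccontr)
    assume r0: "r \<noteq> 0"
    then have "degree (cp g) \<le> degree (cp r)" using \<open>cp g dvd cp r\<close>
      by (intro dvd_imp_degree_le) auto
    with dr r0 show False by simp
  qed
  with e show "g dvd f" by simp
qed

lemma order_le_dvd:
  fixes p f :: "complex poly"
  assumes "p \<noteq> 0" "\<And>a. order a p \<le> order a f"
  shows "p dvd f"
  using assms
proof (induction "degree p" arbitrary: p f)
  case 0
  then have "is_unit p" by (simp add: is_unit_iff_degree)
  then show ?case by (rule unit_imp_dvd)
next
  case (Suc n)
  show ?case
  proof (cases "f = 0")
    case True then show ?thesis by simp
  next
    case f0: False
    obtain a where "poly p a = 0" using alg_closed_imp_poly_has_root[of p] Suc(2) by auto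
    then have "[:-a,1:] dvd p" using dvd_iff_poly_eq_0[of "-a" p] by simp
    then obtain p' where pp: "p = [:-a,1:] * p'" by (auto elim!: dvdE)
    have "order a p \<ge> 1" using \<open>poly p a = 0\<close> Suc(3) order_root by (metis less_one not_le)
    then have "order a f \<ge> 1" using Suc(4)[of a] by linarith
    then have "[:-a,1:]^1 dvd f" using order_divides by blast
    then obtain f' where ff: "f = [:-a,1:] * f'" by (auto elim!: dvdE)
    have p'0: "p' \<noteq> 0" using pp Suc(3) by auto
    have f'0: "f' \<noteq> 0" using ff f0 by auto
    have "degree p = degree [:-a,1:] + degree p'" unfolding pp by (rule degree_mult_eq) (auto simp: p'0)
    then have dp': "n = degree p'" using Suc(2) by simp
    have "order b p' \<le> order b f'" for b
      using Suc(4)[of b] Suc(3) f0 unfolding pp ff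
      by (subst (asm) (1 2) order_mult) auto
    then have "p' dvd f'" using Suc(1)[OF dp' p'0] by blast
    then show ?thesis unfolding pp ff by (rule mult_dvd_mono[OF dvd_refl])
  qed
qed

lemma dvd_iff_order:
  fixes p f :: "complex poly"
  assumes "p \<noteq> 0"
  shows "p dvd f \<longleftrightarrow> f = 0 \<or> (\<forall>a. order a p \<le> order a f)"
  using assms order_le_dvd dvd_imp_order_le by blast

lemma order_prod:
  fixes f :: "'b \<Rightarrow> complex poly"
  assumes "finite A" "\<And>x. x \<in> A \<Longrightarrow> f x \<noteq> 0"
  shows "order a (prod f A) = (\<Sum>x\<in>A. order a (f x))"
  using assms by (induction A rule: finite_induct) (auto simp: order_mult)

lemma order_pow:
  fixes p :: "complex poly"
  assumes "p \<noteq> 0"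
  shows "order a (p ^ k) = k * order a p"
  using assms by (induction k) (auto simp: order_mult)

lemma Q_ne0: "(1 + monom 1 m :: complex poly) \<noteq> 0"
proof -
  have "poly (1 + monom 1 m :: complex poly) 0 \<noteq> 0" by (cases m) (auto simp: poly_monom)
  then show ?thesis by (metis poly_0)
qed

lemma order_Q:
  fixes z :: complex
  assumes "m \<ge> 1"
  shows "order z (1 + monom 1 m) = (if z ^ m = -1 then 1 else 0)"
proof (cases "z ^ m = -1")
  case False
  then have "poly (1 + monom 1 m) z \<noteq> 0" by (auto simp: poly_monom add_eq_0_iff)
  then have "order z (1 + monom 1 m) = 0" by (rule order_0I)
  then show ?thesis using False by simp
next
  case True
  have "rsquarefree (1 + monom 1 m :: complex poly)"
  proof (subst rsquarefree_roots, intro allI notI)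
    fix a :: complex
    assume h: "poly (1 + monom 1 m) a = 0 \<and> poly (pderiv (1 + monom 1 m)) a = 0"
    then have "a ^ m = -1" by (simp add: poly_monom add_eq_0_iff)
    then have "a \<noteq> 0" using assms by (auto simp: power_0_left)
    moreover have "of_nat m * a ^ (m - 1) = 0"
      using h by (simp add: pderiv_add pderiv_monom poly_monom)
    ultimately show False using assms by simp
  qed
  moreover have "poly (1 + monom 1 m) z = 0" using True by (simp add: poly_monom)
  ultimately have "order z (1 + monom 1 m) = 1" using rsquarefree_root_order Q_ne0 by blast
  then show ?thesis using True by simp
qed



lemma card_odd: "card {t\<in>{1..M::nat}. odd t} = M - M div 2"
proof (induction M)
  case 0 then show ?case by simp
next
  case (Suc M)
  have "{t\<in>{1..Suc M}. odd t} = {t\<in>{1..M}. odd t} \<union> (if odd (Suc M) then {Suc M} else {})"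
    by (auto simp: le_Suc_eq)
  moreover have "Suc M \<notin> {t\<in>{1..M}. odd t}" by auto
  ultimately show ?case using Suc
    by (cases "even M") (auto simp: card_insert_if odd_Suc_div_two even_Suc_div_two elim!: evenE oddE)
qed

lemma card_mult_odd:
  assumes h: "h \<ge> (1::nat)" and P: "\<And>i. P i \<longleftrightarrow> (\<exists>t. odd t \<and> i = h*t)"
  shows "card {i\<in>{1..N}. P i} = N div h - N div (2*h)"
proof -
  have "{i\<in>{1..N}. P i} = (\<lambda>t. h*t) ` {t\<in>{1..N div h}. odd t}"
  proof (intro set_eqI iffI)
    fix i assume "i \<in> {i\<in>{1..N}. P i}"
    then obtain t where t: "odd t" "i = h*t" "i \<le> N" using P by auto
    then have "t \<ge> 1" by (cases t) auto
    moreover have "t \<le> N div h" using t h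
      by (metis div_le_mono nonzero_mult_div_cancel_left not_one_le_zero)
    ultimately show "i \<in> (\<lambda>t. h*t) ` {t\<in>{1..N div h}. odd t}" using t by auto
  next
    fix i assume "i \<in> (\<lambda>t. h*t) ` {t\<in>{1..N div h}. odd t}"
    then obtain t where t: "odd t" "i = h*t" "t \<ge> 1" "t \<le> N div h" by auto
    have "h * t \<le> h * (N div h)" using t by simp
    also have "\<dots> \<le> N" by simp
    finally have "i \<le> N" using t by simp
    moreover have "i \<ge> 1" using t h by simp
    ultimately show "i \<in> {i\<in>{1..N}. P i}" using P t by auto
  qed
  moreover have "inj_on (\<lambda>t. h*t) A" for A using h by (auto simp: inj_on_def)
  ultimately have "card {i\<in>{1..N}. P i} = card {t\<in>{1..N div h}. odd t}" by (simp add: card_image)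
  also have "\<dots> = N div h - N div h div 2" by (rule card_odd)
  also have "N div h div 2 = N div (2*h)" by (simp add: div_mult2_eq mult.commute)
  finally show ?thesis .
qed

lemma telescope:
  fixes a :: "nat \<Rightarrow> nat"
  assumes "\<And>k. a (Suc k) \<le> a k"
  shows "(\<Sum>k\<in>{1..L}. a k - a (Suc k)) = a 1 - a (Suc L)"
proof (induction L)
  case 0 then show ?case by simp
next
  case (Suc L)
  have "a (Suc (Suc L)) \<le> a (Suc L)" "a (Suc L) \<le> a 1"
    using assms by (auto intro: antimonoI[THEN antimonoD] simp: lift_Suc_antimono_le[of a, OF assms])
  then show ?case using Suc by simp
qed

lemma log_bound:
  assumes "n \<ge> (1::nat)"
  shows "n < 2 ^ Suc (nat \<lfloor>log 2 (real n)\<rfloor>)"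
proof -
  have l0: "log 2 (real n) \<ge> 0" using assms by simp
  have "log 2 (real n) < real_of_int \<lfloor>log 2 (real n)\<rfloor> + 1" by linarith
  also have "\<dots> = real (Suc (nat \<lfloor>log 2 (real n)\<rfloor>))" using l0 by simp
  finally have "real n < 2 powr real (Suc (nat \<lfloor>log 2 (real n)\<rfloor>))"
    using assms by (subst (asm) log_less_iff) auto
  then have "real n < 2 ^ Suc (nat \<lfloor>log 2 (real n)\<rfloor>)" by (metis powr_realpow zero_less_numeral)
  then show ?thesis by (metis of_nat_less_iff of_nat_numeral of_nat_power)
qed

lemma char_odd:
  fixes z :: complex
  assumes h1: "h \<ge> 1" and zh: "z ^ h = -1" and minh: "\<And>i. 1 \<le> i \<Longrightarrow> i < h \<Longrightarrow> z ^ i \<noteq> -1"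
  shows "z ^ i = -1 \<longleftrightarrow> (\<exists>t. odd t \<and> i = h*t)"
proof
  assume zi: "z ^ i = -1"
  have "z ^ (2*h) = (z^h)^2" by (subst mult.commute) (rule power_mult)
  then have z2h: "z ^ (2*h) = 1" using zh by simp
  define r where "r = i mod (2*h)"
  define q where "q = i div (2*h)"
  have iqr: "i = 2*h*q + r" by (simp add: q_def r_def)
  have "z ^ i = (z^(2*h))^q * z^r" unfolding iqr by (simp only: power_add power_mult)
  then have "z ^ i = z ^ r" using z2h by simp
  then have zr: "z ^ r = -1" using zi by simp
  have rlt: "r < 2*h" using h1 by (simp add: r_def)
  have "r \<noteq> 0" proof assume "r = 0" then have "z ^ r = 1" by simp
    with zr show False by simp qed
  have "r \<ge> h" using minh[of r] zr \<open>r \<noteq> 0\<close> by linarith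
  have "r = h"
  proof (rule ccontr)
    assume "r \<noteq> h"
    then have "r > h" using \<open>r \<ge> h\<close> by simp
    have "z ^ (2*h - r) * z ^ r = 1" using rlt z2h by (simp flip: power_add)
    then have "z ^ (2*h - r) = -1" using zr by (simp add: minus_equation_iff)
    then show False using minh[of "2*h - r"] \<open>r > h\<close> rlt by linarith
  qed
  then have "i = h * (2*q+1)" using iqr by (simp add: algebra_simps)
  then show "\<exists>t. odd t \<and> i = h*t" by (intro exI[of _ "2*q+1"]) simp
next
  assume "\<exists>t. odd t \<and> i = h*t"
  then obtain t where "odd t" "i = h*t" by blast
  then have "z ^ i = (z^h)^t" by (simp only: power_mult)
  also have "\<dots> = -1" using zh \<open>odd t\<close> by simp
  finally show "z ^ i = -1" .
qed



lemma key:
  fixes z :: complex and n w :: nat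
  assumes "n \<ge> 1"
  shows "(\<Sum>k\<in>{1..nat \<lfloor>log 2 (real n)\<rfloor>}. card {i\<in>{1..n div 2^k}. z^i = -1}) \<le> w
     \<longleftrightarrow> (\<forall>m\<in>{1..n div 2}. z^m = -1 \<longrightarrow> n div (2*m) \<le> w)"
proof (cases "\<exists>i\<ge>1. z^i = -1")
  case False
  then have "{i\<in>{1..N}. z^i = -1} = {}" for N by auto
  then have S0: "(\<Sum>k\<in>{1..nat \<lfloor>log 2 (real n)\<rfloor>}. card {i\<in>{1..n div 2^k}. z^i = -1}) = 0" by simp
  moreover have R0: "\<forall>m\<in>{1..n div 2}. z^m = -1 \<longrightarrow> n div (2*m) \<le> w" using False by auto
  show ?thesis unfolding S0 using R0 by simp
next
  case True
  define h where "h = (LEAST i. i \<ge> 1 \<and> z^i = -1)"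
  have hP: "h \<ge> 1 \<and> z^h = -1" unfolding h_def using True by (rule LeastI_ex)
  have hmin: "\<And>i. i \<ge> 1 \<Longrightarrow> z^i = -1 \<Longrightarrow> h \<le> i" unfolding h_def by (simp add: Least_le)
  have ch: "z^i = -1 \<longleftrightarrow> (\<exists>t. odd t \<and> i = h*t)" for i
  proof (rule char_odd)
    show "1 \<le> h" "z^h = -1" using hP by auto
    show "\<And>i. 1 \<le> i \<Longrightarrow> i < h \<Longrightarrow> z ^ i \<noteq> - 1" using hmin by force
  qed
  define L where "L = nat \<lfloor>log 2 (real n)\<rfloor>"
  define a where "a k = n div (2^k * h)" for k
  have card_k: "card {i\<in>{1..n div 2^k}. z^i = -1} = a k - a (Suc k)" for k
  proof -
    have "card {i\<in>{1..n div 2^k}. z^i = -1} = n div 2^k div h - n div 2^k div (2*h)"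
      by (rule card_mult_odd) (use hP ch in auto)
    also have "n div 2^k div h = a k" by (simp add: a_def div_mult2_eq)
    also have "n div 2^k div (2*h) = a (Suc k)"
      unfolding a_def div_mult2_eq[symmetric] by (simp add: mult_ac)
    finally show ?thesis .
  qed
  have amono: "a (Suc k) \<le> a k" for k
    unfolding a_def using hP by (intro div_le_mono2) auto
  have "n < 2 ^ Suc L" unfolding L_def using assms by (rule log_bound)
  also have "\<dots> \<le> 2 ^ Suc L * h" using hP by simp
  finally have aL: "a (Suc L) = 0" by (simp add: a_def)
  have "(\<Sum>k\<in>{1..L}. card {i\<in>{1..n div 2^k}. z^i = -1}) = (\<Sum>k\<in>{1..L}. a k - a (Suc k))"
    by (rule sum.cong[OF refl card_k])
  also have "\<dots> = a 1 - a (Suc L)" by (rule telescope[of a, OF amono])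
  also have "\<dots> = n div (2*h)" using aL by (simp add: a_def)
  finally have S: "(\<Sum>k\<in>{1..L}. card {i\<in>{1..n div 2^k}. z^i = -1}) = n div (2*h)" .
  have R: "(\<forall>m\<in>{1..n div 2}. z^m = -1 \<longrightarrow> n div (2*m) \<le> w) \<longleftrightarrow> n div (2*h) \<le> w"
  proof
    assume A: "\<forall>m\<in>{1..n div 2}. z^m = -1 \<longrightarrow> n div (2*m) \<le> w"
    show "n div (2*h) \<le> w"
    proof (cases "h \<le> n div 2")
      case True then show ?thesis using A hP by auto
    next
      case False
      then have "n < 2*h" by linarith
      then show ?thesis by simp
    qed
  next
    assume B: "n div (2*h) \<le> w"
    show "\<forall>m\<in>{1..n div 2}. z^m = -1 \<longrightarrow> n div (2*m) \<le> w"
    proof (intro ballI impI)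
      fix m assume "m \<in> {1..n div 2}" "z^m = -1"
      then have "h \<le> m" using hmin by auto
      then have "n div (2*m) \<le> n div (2*h)" using hP by (intro div_le_mono2) auto
      then show "n div (2*m) \<le> w" using B by simp
    qed
  qed
  show ?thesis using S R unfolding L_def by simp
qed


lemma card_as_sum:
  assumes "finite A"
  shows "(\<Sum>i\<in>A. (if P i then 1 else 0::nat)) = card {i\<in>A. P i}"
  using sum.inter_filter[OF assms, of "\<lambda>_. 1::nat" P] by simp

theorem theorem4p1:
  fixes n :: nat and f :: "int poly"
  assumes "n \<ge> 1"
  shows "G n dvd f \<longleftrightarrow>
    (\<forall>m\<in>{1..n div 2}. (1 + monom 1 m) ^ (n div (2 * m)) dvd f)"
proof -
  define Q :: "nat \<Rightarrow> int poly" where "Q m = 1 + monom 1 m" for m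
  have lcQ: "lead_coeff (Q m) = 1" if "m \<ge> 1" for m
  proof -
    have "degree (1::int poly) < degree (monom 1 m :: int poly)" using that by (simp add: degree_monom_eq)
    then have d: "degree (Q m) = m" unfolding Q_def
      by (subst degree_add_eq_right) (auto simp: degree_monom_eq)
    show ?thesis using that by (simp add: d) (simp add: Q_def)
  qed
  have cpQ: "cp (Q m) = 1 + monom 1 m" for m by (simp add: Q_def)
  define L where "L = nat \<lfloor>log 2 (real n)\<rfloor>"
  have GQ: "G n = (\<Prod>k\<in>{1..L}. \<Prod>i\<in>{1..n div 2^k}. Q i)" by (simp add: G_def Q_def L_def)
  have lcG: "lead_coeff (G n) = 1" unfolding GQ lead_coeff_prod
    by (intro prod.neutral ballI) (auto simp: lcQ)
  have inner0: "(\<Prod>i\<in>{1..n div 2^k}. (1 + monom 1 i :: complex poly)) \<noteq> 0" for k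
    using Q_ne0 by (simp add: prod_zero_iff)
  have ordG: "order z (cp (G n)) = (\<Sum>k\<in>{1..L}. card {i\<in>{1..n div 2^k}. z^i = -1})" for z
  proof -
    have "order z (cp (G n)) = (\<Sum>k\<in>{1..L}. \<Sum>i\<in>{1..n div 2^k}. order z (1 + monom 1 i :: complex poly))"
      unfolding GQ cp_prod cpQ
      by (subst order_prod) (auto simp: inner0 order_prod Q_ne0)
    also have "\<dots> = (\<Sum>k\<in>{1..L}. \<Sum>i\<in>{1..n div 2^k}. (if z^i = -1 then 1 else 0))"
      by (intro sum.cong refl) (auto simp: order_Q)
    also have "\<dots> = (\<Sum>k\<in>{1..L}. card {i\<in>{1..n div 2^k}. z^i = -1})"
      by (intro sum.cong refl card_as_sum) auto
    finally show ?thesis .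
  qed
  have cpG0: "cp (G n) \<noteq> 0" using lcG by (auto simp del: cp_eq_0_iff simp: cp_eq_0_iff)
  have LHS: "G n dvd f \<longleftrightarrow> f = 0 \<or> (\<forall>z. order z (cp (G n)) \<le> order z (cp f))"
    using monic_dvd_cp[OF lcG] dvd_iff_order[OF cpG0] by simp
  have RHSm: "(Q m)^e dvd f \<longleftrightarrow> f = 0 \<or> (\<forall>z. e * (if z^m = -1 then 1 else 0) \<le> order z (cp f))"
    if "m \<ge> 1" for m e
  proof -
    have lc: "lead_coeff (Q m ^ e) = 1" using lcQ[OF that] by (simp add: lead_coeff_power)
    have ne: "cp (Q m ^ e) \<noteq> 0" using Q_ne0 by (simp add: cpQ)
    have "order z (cp (Q m ^ e)) = e * (if z^m = -1 then 1 else 0)" for z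
      using Q_ne0 that by (simp add: cpQ order_pow order_Q)
    then show ?thesis using monic_dvd_cp[OF lc] dvd_iff_order[OF ne] by simp
  qed
  show ?thesis
  proof (cases "f = 0")
    case True then show ?thesis by simp
  next
    case False
    have "G n dvd f \<longleftrightarrow> (\<forall>z. (\<Sum>k\<in>{1..L}. card {i\<in>{1..n div 2^k}. z^i = -1}) \<le> order z (cp f))"
      using LHS False ordG by simp
    also have "\<dots> \<longleftrightarrow> (\<forall>z. \<forall>m\<in>{1..n div 2}. z^m = -1 \<longrightarrow> n div (2*m) \<le> order z (cp f))"
      unfolding L_def using key[OF assms] by simp
    also have "\<dots> \<longleftrightarrow> (\<forall>m\<in>{1..n div 2}. \<forall>z. (n div (2*m)) * (if z^m = -1 then 1 else 0) \<le> order z (cp f))"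
      by auto
    also have "\<dots> \<longleftrightarrow> (\<forall>m\<in>{1..n div 2}. (Q m) ^ (n div (2 * m)) dvd f)"
      using RHSm False by auto
    finally show ?thesis by (simp add: Q_def)
  qed
qed

end
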